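(* For every integer $\ell\ge 3$, every graph $G$ with no induced cycle of length at least $\ell$ satisfies $\mathrm{cop}(G)\le \ell-2$.
   Context: All graphs are finite, undirected, without loops or multiple edges. Cops and Robber game on a connected graph: for an integer $k\ge 1$, the cop player places $k$ cops on (not necessarily distinct) vertices, then the robber is placed on a vertex; then, starting with the cops, the players alternate moves. In a cop move, each cop either stays or moves to an adjacent vertex; in a robber move, the robber stays or moves to an adjacent vertex. The cops win if at some point a cop and the robber occupy the same vertex. Both players have complete information. The cop number $\mathrm{cop}(G)$ of a connected graph $G$ is the smallest $k$ such that the cops have a winning strategy with $k$ cops; for a non-connected graph it is the maximum cop number of its connected components. *)

theory Defs
  imports Main
begin

definition graph :: "'a set \<Rightarrow> ('a \<Rightarrow> 'a \<Rightarrow> bool) \<Rightarrow> bool" where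
  "graph V E \<longleftrightarrow> finite V \<and> (\<forall>x y. E x y \<longrightarrow> E y x) \<and> (\<forall>x. \<not> E x x)
     \<and> (\<forall>x y. E x y \<longrightarrow> x \<in> V \<and> y \<in> V)"

definition induced_cycle :: "'a set \<Rightarrow> ('a \<Rightarrow> 'a \<Rightarrow> bool) \<Rightarrow> 'a list \<Rightarrow> bool" where
  "induced_cycle V E vs \<longleftrightarrow> length vs \<ge> 3 \<and> distinct vs \<and> set vs \<subseteq> V \<and>
     (\<forall>i < length vs. \<forall>j < length vs.
        E (vs ! i) (vs ! j) \<longleftrightarrow> (j = Suc i mod length vs \<or> i = Suc j mod length vs))"

definition reach :: "'a set \<Rightarrow> ('a \<Rightarrow> 'a \<Rightarrow> bool) \<Rightarrow> 'a \<Rightarrow> 'a \<Rightarrow> bool" where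
  "reach V E = (\<lambda>x y. E x y \<and> x \<in> V \<and> y \<in> V)\<^sup>*\<^sup>*"

definition components :: "'a set \<Rightarrow> ('a \<Rightarrow> 'a \<Rightarrow> bool) \<Rightarrow> 'a set set" where
  "components V E = {{u. reach V E v u} | v. v \<in> V}"

definition connected_graph :: "'a set \<Rightarrow> ('a \<Rightarrow> 'a \<Rightarrow> bool) \<Rightarrow> bool" where
  "connected_graph V E \<longleftrightarrow> V \<noteq> {} \<and> (\<forall>u\<in>V. \<forall>v\<in>V. reach V E u v)"

text \<open>A cop strategy s maps the history of the game (list of (cop positions, robber position)
  states so far) to the next cop positions; s [] is the initial placement.
  Timeline: C 0 = s [], then the robber places itself at R 0; in round t+1 the cops move
  to C (t+1) = s (history up to t), then the robber moves to R (t+1).\<close>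

definition cop_step :: "('a \<Rightarrow> 'a \<Rightarrow> bool) \<Rightarrow> 'a list \<Rightarrow> 'a list \<Rightarrow> bool" where
  "cop_step E c c' \<longleftrightarrow> length c' = length c \<and>
     (\<forall>i < length c. c' ! i = c ! i \<or> E (c ! i) (c' ! i))"

definition robber_walk :: "'a set \<Rightarrow> ('a \<Rightarrow> 'a \<Rightarrow> bool) \<Rightarrow> (nat \<Rightarrow> 'a) \<Rightarrow> bool" where
  "robber_walk V E R \<longleftrightarrow> R 0 \<in> V \<and> (\<forall>t. R (Suc t) = R t \<or> E (R t) (R (Suc t)))"

primrec history :: "(('a list \<times> 'a) list \<Rightarrow> 'a list) \<Rightarrow> (nat \<Rightarrow> 'a) \<Rightarrow> nat \<Rightarrow> ('a list \<times> 'a) list" where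
  "history s R 0 = [(s [], R 0)]"
| "history s R (Suc t) = history s R t @ [(s (history s R t), R (Suc t))]"

definition cop_pos :: "(('a list \<times> 'a) list \<Rightarrow> 'a list) \<Rightarrow> (nat \<Rightarrow> 'a) \<Rightarrow> nat \<Rightarrow> 'a list" where
  "cop_pos s R t = fst (last (history s R t))"

definition winning_cop_strategy ::
  "'a set \<Rightarrow> ('a \<Rightarrow> 'a \<Rightarrow> bool) \<Rightarrow> nat \<Rightarrow> (('a list \<times> 'a) list \<Rightarrow> 'a list) \<Rightarrow> bool" where
  "winning_cop_strategy V E k s \<longleftrightarrow> length (s []) = k \<and> set (s []) \<subseteq> V \<and>
     (\<forall>R. robber_walk V E R \<longrightarrow>
        (\<forall>t. cop_step E (cop_pos s R t) (cop_pos s R (Suc t))) \<and>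
        (\<exists>t. \<exists>i < k. cop_pos s R t ! i = R t \<or> cop_pos s R (Suc t) ! i = R t))"

definition cops_win :: "'a set \<Rightarrow> ('a \<Rightarrow> 'a \<Rightarrow> bool) \<Rightarrow> nat \<Rightarrow> bool" where
  "cops_win V E k \<longleftrightarrow> (\<exists>s. winning_cop_strategy V E k s)"

definition cop_number_conn :: "'a set \<Rightarrow> ('a \<Rightarrow> 'a \<Rightarrow> bool) \<Rightarrow> nat" where
  "cop_number_conn V E = (LEAST k. k \<ge> 1 \<and> cops_win V E k)"

definition cop_number :: "'a set \<Rightarrow> ('a \<Rightarrow> 'a \<Rightarrow> bool) \<Rightarrow> nat" where
  "cop_number V E = (if V = {} then 0 else
     Max ((\<lambda>C. cop_number_conn C (\<lambda>x y. E x y \<and> x \<in> C \<and> y \<in> C)) ` components V E))"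

end

theory Submission
  imports Defs
begin

locale sgraph =
  fixes V :: "'a set" and E :: "'a \<Rightarrow> 'a \<Rightarrow> bool"
  assumes gr: "graph V E"
begin

lemma fin: "finite V" using gr unfolding graph_def by blast
lemma esym: "E x y \<Longrightarrow> E y x" using gr unfolding graph_def by blast
lemma irr[simp]: "\<not> E x x" using gr unfolding graph_def by blast
lemma inV1: "E x y \<Longrightarrow> x \<in> V" using gr unfolding graph_def by blast
lemma inV2: "E x y \<Longrightarrow> y \<in> V" using gr unfolding graph_def by blast

definition rel :: "'a set \<Rightarrow> 'a \<Rightarrow> 'a \<Rightarrow> bool" where
  "rel X = (\<lambda>a b. E a b \<and> a \<in> X \<and> b \<in> X)"

definition comp :: "'a set \<Rightarrow> 'a \<Rightarrow> 'a set" where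
  "comp X r = {u. (rel X)\<^sup>*\<^sup>* r u}"

definition bd :: "'a set \<Rightarrow> 'a set" where
  "bd C = {x. x \<notin> C \<and> (\<exists>c\<in>C. E c x)}"

definition nbh :: "'a set \<Rightarrow> 'a set" where
  "nbh S = {x. \<exists>u\<in>S. x = u \<or> E u x}"

lemma comp_self: "r \<in> comp X r" unfolding comp_def by simp

lemma comp_sub: assumes "r \<in> X" shows "comp X r \<subseteq> X"
proof
  fix u assume "u \<in> comp X r"
  then have "(rel X)\<^sup>*\<^sup>* r u" unfolding comp_def by simp
  then show "u \<in> X" using assms by (induction rule: rtranclp_induct) (auto simp: rel_def)
qed

lemma comp_closed: "r \<in> X \<Longrightarrow> u \<in> comp X r \<Longrightarrow> b \<in> X \<Longrightarrow> E u b \<Longrightarrow> b \<in> comp X r"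
  using comp_sub unfolding comp_def
  by (auto simp: rel_def intro: rtranclp.rtrancl_into_rtrancl)

lemma rel_symp: "symp (rel X)" unfolding rel_def symp_def using esym by blast

lemma comp_eq: assumes "u \<in> comp X r" shows "comp X u = comp X r"
proof -
  have 1: "(rel X)\<^sup>*\<^sup>* r u" using assms unfolding comp_def by simp
  hence 2: "(rel X)\<^sup>*\<^sup>* u r" using sympD[OF symp_rtranclp[OF rel_symp]] by blast
  show ?thesis unfolding comp_def using 1 2 by (auto intro: rtranclp_trans)
qed

lemma comp_mono: "X' \<subseteq> X \<Longrightarrow> comp X' r \<subseteq> comp X r"
  unfolding comp_def
  by (auto elim: rtranclp_mono[THEN predicate2D, rotated] simp: rel_def)

lemma comp_subset:
  assumes "r' \<in> C" "\<And>a b. a \<in> C \<Longrightarrow> b \<in> X' \<Longrightarrow> E a b \<Longrightarrow> b \<in> C"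
  shows "comp X' r' \<subseteq> C"
proof
  fix u assume "u \<in> comp X' r'"
  then have "(rel X')\<^sup>*\<^sup>* r' u" unfolding comp_def by simp
  then show "u \<in> C" using assms by (induction rule: rtranclp_induct) (auto simp: rel_def)
qed

lemma comp_fin: "r \<in> X \<Longrightarrow> X \<subseteq> V \<Longrightarrow> finite (comp X r)"
  using comp_sub fin by (meson finite_subset subset_trans)

lemma leave:
  assumes "(rel X)\<^sup>*\<^sup>* a b" "a \<in> C" "b \<notin> C"
  shows "\<exists>c\<in>C. \<exists>d. d \<notin> C \<and> E c d"
  using assms by (induction rule: rtranclp_induct) (auto simp: rel_def)

lemma bd_in:
  assumes "r \<in> V - nbh S" "x \<in> bd (comp (V - nbh S) r)"
  shows "x \<in> nbh S" "x \<notin> S"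
proof -
  let ?X = "V - nbh S"
  obtain c where c: "c \<in> comp ?X r" "E c x" "x \<notin> comp ?X r" using assms(2) unfolding bd_def by auto
  have cX: "c \<in> ?X" using comp_sub[OF assms(1)] c by auto
  show "x \<in> nbh S"
  proof (rule ccontr)
    assume "x \<notin> nbh S"
    hence "x \<in> ?X" using inV2[OF c(2)] by auto
    thus False using comp_closed[OF assms(1) c(1) _ c(2)] c(3) by auto
  qed
  show "x \<notin> S"
  proof
    assume "x \<in> S"
    hence "c \<in> nbh S" unfolding nbh_def using esym[OF c(2)] by auto
    thus False using cX by auto
  qed
qed

definition walk :: "'a list \<Rightarrow> bool" where
  "walk w \<longleftrightarrow> (\<forall>j. Suc j < length w \<longrightarrow> E (w!j) (w!Suc j))"

definition ipath :: "'a list \<Rightarrow> bool" where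
  "ipath xs \<longleftrightarrow> distinct xs \<and> (\<forall>a<length xs. \<forall>b<length xs. E (xs!a) (xs!b) \<longleftrightarrow> (b = Suc a \<or> a = Suc b))"

definition interior :: "'a list \<Rightarrow> 'a set \<Rightarrow> bool" where
  "interior w C \<longleftrightarrow> (\<forall>j. 0 < j \<longrightarrow> j < length w - 1 \<longrightarrow> w!j \<in> C)"

lemma walk_of:
  assumes "(rel X)\<^sup>*\<^sup>* a b"
  shows "\<exists>w. w \<noteq> [] \<and> hd w = a \<and> last w = b \<and> walk w \<and> (\<forall>u \<in> set w. (rel X)\<^sup>*\<^sup>* a u)"
  using assms
proof (induction rule: rtranclp_induct)
  case base
  then show ?case by (intro exI[of _ "[a]"]) (auto simp: walk_def)
next
  case (step y z)
  then obtain w where w: "w \<noteq> []" "hd w = a" "last w = y" "walk w" "\<forall>u \<in> set w. (rel X)\<^sup>*\<^sup>* a u" by blast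
  have "walk (w @ [z])" unfolding walk_def
  proof (intro allI impI)
    fix j assume j: "Suc j < length (w @ [z])"
    show "E ((w @ [z]) ! j) ((w @ [z]) ! Suc j)"
    proof (cases "Suc j < length w")
      case True then show ?thesis using w(4) unfolding walk_def by (simp add: nth_append)
    next
      case False
      hence "j = length w - 1" using j by simp
      moreover have "w ! (length w - 1) = y" using w(1,3) by (simp add: last_conv_nth)
      ultimately show ?thesis using step(2) w(1) False by (auto simp: nth_append rel_def)
    qed
  qed
  then show ?case using w step by (intro exI[of _ "w @ [z]"]) (auto intro: rtranclp.rtrancl_into_rtrancl)
qed

lemma nth_cut: "a \<le> length w \<Longrightarrow> b \<le> length w \<Longrightarrow> (take a w @ drop b w) ! j = (if j < a then w!j else w!(b + (j - a)))"
  by (auto simp: nth_append min_def)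

lemma cut:
  assumes "walk w" "interior w C" "a < b" "b < length w"
    "a = 0 \<Longrightarrow> w!b = w!0" "a > 0 \<Longrightarrow> E (w!(a-1)) (w!b)" "2 \<le> a + (length w - b)"
  shows "walk (take a w @ drop b w) \<and> interior (take a w @ drop b w) C \<and>
     length (take a w @ drop b w) < length w \<and> 2 \<le> length (take a w @ drop b w) \<and>
     (take a w @ drop b w) ! 0 = w ! 0 \<and>
     (take a w @ drop b w) ! (length (take a w @ drop b w) - 1) = w ! (length w - 1)"
proof -
  let ?w = "take a w @ drop b w"
  have len: "length ?w = a + (length w - b)" using assms by simp
  have nth: "\<And>j. ?w ! j = (if j < a then w!j else w!(b + (j - a)))" using nth_cut[of a w b] assms by simp
  have "walk ?w" unfolding walk_def
  proof (intro allI impI)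
    fix j assume j: "Suc j < length ?w"
    show "E (?w ! j) (?w ! Suc j)"
    proof -
      consider "Suc j < a" | "Suc j = a" | "j \<ge> a" by linarith
      then show ?thesis
      proof cases
        case 1 then show ?thesis using assms(1) nth unfolding walk_def
          by (metis Suc_lessD assms(3,4) less_trans)
      next
        case 2 then show ?thesis using assms(6) nth by auto
      next
        case 3
        have "Suc (b + (j - a)) < length w" using j len 3 by simp
        then have "E (w ! (b + (j - a))) (w ! Suc (b + (j - a)))" using assms(1) unfolding walk_def by blast
        moreover have "b + (Suc j - a) = Suc (b + (j - a))" using 3 by simp
        ultimately show ?thesis using nth 3 by simp
      qed
    qed
  qed
  moreover have "interior ?w C" unfolding interior_def
  proof (intro allI impI)
    fix j assume j: "0 < j" "j < length ?w - 1"
    show "?w ! j \<in> C"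
    proof (cases "j < a")
      case True then show ?thesis using nth assms(2,3,4) j unfolding interior_def by auto
    next
      case False
      have "0 < b + (j - a)" "b + (j - a) < length w - 1" using j len False assms(3) by auto
      then show ?thesis using nth assms(2) False unfolding interior_def by auto
    qed
  qed
  moreover have "?w ! 0 = w ! 0" using nth assms(5) by (cases "a = 0") auto
  moreover have "?w ! (length ?w - 1) = w ! (length w - 1)"
    using nth len assms(3,4) by auto
  ultimately show ?thesis using len assms by auto
qed

lemma shortest:
  assumes "walk w" "2 \<le> length w" "w!0 \<noteq> w!(length w - 1)" "interior w C"
  shows "\<exists>w'. ipath w' \<and> 2 \<le> length w' \<and> w'!0 = w!0 \<and> w'!(length w' - 1) = w!(length w - 1) \<and> interior w' C"
  using assms
proof (induction "length w" arbitrary: w rule: less_induct)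
  case less
  show ?case
  proof (cases "ipath w")
    case True then show ?thesis using less by blast
  next
    case False
    have "\<exists>a b. a < b \<and> b < length w \<and> (w!a = w!b \<or> (Suc a < b \<and> E (w!a) (w!b)))"
    proof (cases "distinct w")
      case False
      then obtain a b where "a < length w" "b < length w" "a \<noteq> b" "w!a = w!b"
        by (auto simp: distinct_conv_nth)
      then show ?thesis by (metis linorder_neqE_nat)
    next
      case True
      then obtain a b where ab: "a < length w" "b < length w" "E (w!a) (w!b) \<noteq> (b = Suc a \<or> a = Suc b)"
        using False unfolding ipath_def by blast
      have "b = Suc a \<Longrightarrow> E (w!a) (w!b)" using less(2) ab unfolding walk_def by blast
      moreover have "a = Suc b \<Longrightarrow> E (w!a) (w!b)" using less(2) ab esym unfolding walk_def by blast
      ultimately have e: "E (w!a) (w!b)" "b \<noteq> Suc a" "a \<noteq> Suc b" using ab by auto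
      have "a \<noteq> b" using e(1) by auto
      then show ?thesis using e ab esym
        by (metis Suc_lessI linorder_neqE_nat)
    qed
    then obtain a b where ab: "a < b" "b < length w" "w!a = w!b \<or> (Suc a < b \<and> E (w!a) (w!b))" by blast
    show ?thesis
    proof (cases "w!a = w!b")
      case eq: True
      let ?w = "take a w @ drop b w"
      have "a = 0 \<Longrightarrow> b \<noteq> length w - 1" using less(4) eq by auto
      then have l2: "2 \<le> a + (length w - b)" using ab by (cases "a = 0") auto
      have h6: "a > 0 \<Longrightarrow> E (w!(a-1)) (w!b)" using less(2) eq ab unfolding walk_def
        by (metis Suc_pred' less_trans)
      have h5: "a = 0 \<Longrightarrow> w!b = w!0" using eq by simp
      have c: "walk ?w \<and> interior ?w C \<and> length ?w < length w \<and> 2 \<le> length ?w \<and>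
        ?w ! 0 = w ! 0 \<and> ?w ! (length ?w - 1) = w ! (length w - 1)"
        using cut[OF less(2) less(5) ab(1,2) h5 h6 l2] by auto
      have "\<exists>w'. ipath w' \<and> 2 \<le> length w' \<and> w'!0 = ?w!0 \<and> w'!(length w' - 1) = ?w!(length ?w - 1) \<and> interior w' C"
        by (rule less(1)) (use c less(4) in auto)
      with c show ?thesis by simp
    next
      case ne: False
      then have ch: "Suc a < b" "E (w!a) (w!b)" using ab by auto
      let ?w = "take (Suc a) w @ drop b w"
      have l2: "2 \<le> Suc a + (length w - b)" using ab by auto
      have c: "walk ?w \<and> interior ?w C \<and> length ?w < length w \<and> 2 \<le> length ?w \<and>
        ?w ! 0 = w ! 0 \<and> ?w ! (length ?w - 1) = w ! (length w - 1)"
        using cut[OF less(2) less(5) ch(1) ab(2) _ _ l2] ch by auto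
      have "\<exists>w'. ipath w' \<and> 2 \<le> length w' \<and> w'!0 = ?w!0 \<and> w'!(length w' - 1) = ?w!(length ?w - 1) \<and> interior w' C"
        by (rule less(1)) (use c less(4) in auto)
      with c show ?thesis by simp
    qed
  qed
qed

lemma mod_suc: "x < L \<Longrightarrow> Suc x mod L = (if Suc x = L then 0 else Suc x)" by auto

lemma esym_iff: "E x y \<longleftrightarrow> E y x" using esym by blast

lemma cycle_join:
  assumes A: "ipath A" and B: "ipath B" and dj: "set A \<inter> set B = {}" and ne: "A \<noteq> []" "B \<noteq> []"
    and l3: "length A + length B \<ge> 3" and sv: "set A \<subseteq> V" "set B \<subseteq> V"
    and cr: "\<And>a b. a < length A \<Longrightarrow> b < length B \<Longrightarrow>
       E (A!a) (B!b) \<longleftrightarrow> ((a = length A - 1 \<and> b = 0) \<or> (a = 0 \<and> b = length B - 1))"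
  shows "induced_cycle V E (A @ B)"
proof -
  let ?p = "length A" and ?q = "length B" and ?L = "length A + length B"
  have p1: "?p \<ge> 1" "?q \<ge> 1" "?p > 0" "?q > 0" using ne by (auto simp: Suc_le_eq)
  have main: "E ((A@B)!i) ((A@B)!j) \<longleftrightarrow> (j = Suc i mod ?L \<or> i = Suc j mod ?L)"
    if ij: "i < ?L" "j < ?L" for i j
  proof -
    have mi: "Suc i mod ?L = (if Suc i = ?L then 0 else Suc i)" using mod_suc ij by blast
    have mj: "Suc j mod ?L = (if Suc j = ?L then 0 else Suc j)" using mod_suc ij by blast
    consider "i < ?p" "j < ?p" | "i \<ge> ?p" "j \<ge> ?p" | "i < ?p" "j \<ge> ?p" | "i \<ge> ?p" "j < ?p" by linarith
    then show ?thesis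
    proof cases
      case 1
      have "E ((A@B)!i) ((A@B)!j) \<longleftrightarrow> (j = Suc i \<or> i = Suc j)" using A 1 unfolding ipath_def by (simp add: nth_append)
      moreover have "(j = Suc i mod ?L \<or> i = Suc j mod ?L) \<longleftrightarrow> (j = Suc i \<or> i = Suc j)"
        unfolding mi mj using 1 p1 ij by (auto simp del: length_greater_0_conv)
      ultimately show ?thesis by blast
    next
      case 2
      have "E ((A@B)!i) ((A@B)!j) \<longleftrightarrow> (j - ?p = Suc (i - ?p) \<or> i - ?p = Suc (j - ?p))"
        using B 2 ij unfolding ipath_def by (simp add: nth_append)
      moreover have "(j = Suc i mod ?L \<or> i = Suc j mod ?L) \<longleftrightarrow> (j - ?p = Suc (i - ?p) \<or> i - ?p = Suc (j - ?p))"
        unfolding mi mj using 2 p1 ij by (auto simp del: length_greater_0_conv)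
      ultimately show ?thesis by blast
    next
      case 3
      have "E ((A@B)!i) ((A@B)!j) \<longleftrightarrow> ((i = ?p - 1 \<and> j - ?p = 0) \<or> (i = 0 \<and> j - ?p = ?q - 1))"
        using cr[of i "j - ?p"] 3 ij by (simp add: nth_append)
      moreover have "(j = Suc i mod ?L \<or> i = Suc j mod ?L) \<longleftrightarrow> ((i = ?p - 1 \<and> j - ?p = 0) \<or> (i = 0 \<and> j - ?p = ?q - 1))"
        unfolding mi mj using 3 p1 ij by (auto simp del: length_greater_0_conv)
      ultimately show ?thesis by blast
    next
      case 4
      have "E ((A@B)!i) ((A@B)!j) \<longleftrightarrow> ((j = ?p - 1 \<and> i - ?p = 0) \<or> (j = 0 \<and> i - ?p = ?q - 1))"
        using cr[of j "i - ?p"] 4 ij esym_iff[of "B ! (i - length A)" "A ! j"] by (simp add: nth_append)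
      moreover have "(j = Suc i mod ?L \<or> i = Suc j mod ?L) \<longleftrightarrow> ((j = ?p - 1 \<and> i - ?p = 0) \<or> (j = 0 \<and> i - ?p = ?q - 1))"
        unfolding mi mj using 4 p1 ij by (auto simp del: length_greater_0_conv)
      ultimately show ?thesis by blast
    qed
  qed
  show ?thesis unfolding induced_cycle_def
    using main l3 A B dj sv p1 unfolding ipath_def by auto
qed

lemma ipath_rev: "ipath w \<Longrightarrow> ipath (rev w)"
  unfolding ipath_def
proof (intro conjI allI impI, simp)
  fix a b assume h: "distinct w \<and> (\<forall>a<length w. \<forall>b<length w. E (w ! a) (w ! b) = (b = Suc a \<or> a = Suc b))"
    "a < length (rev w)" "b < length (rev w)"
  then have "E (w ! (length w - Suc a)) (w ! (length w - Suc b)) =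
    (length w - Suc b = Suc (length w - Suc a) \<or> length w - Suc a = Suc (length w - Suc b))" by auto
  moreover have "(length w - Suc b = Suc (length w - Suc a) \<or> length w - Suc a = Suc (length w - Suc b))
     \<longleftrightarrow> (b = Suc a \<or> a = Suc b)" using h(2,3) by auto
  ultimately show "E (rev w ! a) (rev w ! b) = (b = Suc a \<or> a = Suc b)" using h(2,3) by (simp add: rev_nth)
qed

lemma long_cycle:
  assumes P: "ipath P" "P \<noteq> []" "set P \<subseteq> V"
    and r: "r \<in> V - nbh (set P)"
    and x: "x \<in> bd (comp (V - nbh (set P)) r)" "E (P!0) x" "\<forall>m<length P. E (P!m) x \<longrightarrow> m = 0"
    and y: "y \<in> bd (comp (V - nbh (set P)) r)" "E (P!(length P - 1)) y" "\<forall>m<length P. E (P!m) y \<longrightarrow> m = length P - 1"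
    and xy: "x \<noteq> y"
  shows "\<exists>vs. induced_cycle V E vs \<and> length vs \<ge> length P + 2"
proof -
  define X where "X = V - nbh (set P)"
  define C where "C = comp X r"
  have rX: "r \<in> X" using r X_def by simp
  have CX: "C \<subseteq> X" using comp_sub[OF rX] C_def by simp
  have Pn: "set P \<subseteq> nbh (set P)" unfolding nbh_def by auto
  have CP: "z \<in> C \<Longrightarrow> \<not> E (P!m) z \<and> P!m \<noteq> z" if "m < length P" for z m
  proof -
    have Pm: "P!m \<in> set P" using that by simp
    have "E (P!m) z \<or> P!m = z \<Longrightarrow> z \<in> nbh (set P)" unfolding nbh_def using Pm by blast
    then show "z \<in> C \<Longrightarrow> \<not> E (P!m) z \<and> P!m \<noteq> z" using CX unfolding X_def by blast
  qed
  obtain c1 where c1: "c1 \<in> C" "E c1 x" using x(1) unfolding bd_def C_def X_def by auto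
  obtain c2 where c2: "c2 \<in> C" "E c2 y" using y(1) unfolding bd_def C_def X_def by auto
  have xn: "x \<notin> set P" "y \<notin> set P" using bd_in(2)[OF r x(1)] bd_in(2)[OF r y(1)] by simp_all
  have r1: "(rel X)\<^sup>*\<^sup>* r c1" "(rel X)\<^sup>*\<^sup>* r c2" using c1 c2 unfolding C_def comp_def by auto
  have "(rel X)\<^sup>*\<^sup>* c1 r" using r1(1) sympD[OF symp_rtranclp[OF rel_symp]] by blast
  then have "(rel X)\<^sup>*\<^sup>* c1 c2" using r1(2) by (rule rtranclp_trans)
  then obtain w0 where w0: "w0 \<noteq> []" "hd w0 = c1" "last w0 = c2" "walk w0" "\<forall>u \<in> set w0. (rel X)\<^sup>*\<^sup>* c1 u"
    using walk_of by blast
  have w0C: "set w0 \<subseteq> C" using w0(5) comp_eq[of c1 X r] c1(1) unfolding C_def comp_def by auto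
  define w where "w = x # w0 @ [y]"
  have wl: "length w = length w0 + 2" unfolding w_def by simp
  have "walk w" unfolding walk_def
  proof (intro allI impI)
    fix j assume j: "Suc j < length w"
    consider "j = 0" | "j > 0" "Suc j < length w - 1" | "Suc j = length w - 1" using j wl by linarith
    then show "E (w ! j) (w ! Suc j)"
    proof cases
      case 1 then show ?thesis using esym[OF c1(2)] w0(1,2) unfolding w_def by (simp add: hd_conv_nth nth_append)
    next
      case 2
      then obtain j' where j': "j = Suc j'" "Suc j' < length w0" using wl by (cases j) auto
      then show ?thesis using w0(4) unfolding walk_def w_def by (simp add: nth_append)
    next
      case 3
      then have "j = length w0" using wl by simp
      moreover have "w0 ! (length w0 - 1) = c2" using w0(1,3) by (simp add: last_conv_nth)
      ultimately show ?thesis using c2 w0(1) unfolding w_def by (cases w0 rule: rev_cases) (auto simp: nth_append)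
    qed
  qed
  moreover have "interior w C" unfolding interior_def
  proof (intro allI impI)
    fix j assume j: "0 < j" "j < length w - 1"
    then obtain j' where "j = Suc j'" "j' < length w0" using wl by (cases j) auto
    then show "w ! j \<in> C" using w0C unfolding w_def by (auto simp: nth_append)
  qed
  moreover have "w ! 0 = x" "w ! (length w - 1) = y" unfolding w_def by (auto simp: nth_append)
  ultimately obtain w' where w': "ipath w'" "2 \<le> length w'" "w'!0 = x" "w'!(length w' - 1) = y" "interior w' C"
    using shortest[of w C] wl xy by auto
  let ?B = "rev w'"
  have Bi: "ipath ?B" using ipath_rev w'(1) by blast
  have wel: "z \<in> set w' \<Longrightarrow> z = x \<or> z = y \<or> z \<in> C" for z
  proof -
    assume "z \<in> set w'"
    then obtain j where j: "j < length w'" "w'!j = z" by (auto simp: in_set_conv_nth)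
    show ?thesis using w'(3,4,5) j unfolding interior_def
      by (cases "j = 0"; cases "j = length w' - 1") auto
  qed
  have dj: "set P \<inter> set ?B = {}"
  proof -
    have "z \<notin> set P" if "z \<in> C" for z using CP that by (auto simp: in_set_conv_nth)
    then show ?thesis using wel xn by auto
  qed
  have xV: "x \<in> V" "y \<in> V" using inV2 x(2) y(2) by auto
  have CV: "C \<subseteq> V" using CX X_def by auto
  have sB: "set ?B \<subseteq> V" using wel xV CV by auto
  have cr: "E (P!a) (?B!b) \<longleftrightarrow> ((a = length P - 1 \<and> b = 0) \<or> (a = 0 \<and> b = length ?B - 1))"
    if ab: "a < length P" "b < length ?B" for a b
  proof -
    have Bb: "?B ! b = w' ! (length w' - Suc b)" using ab by (simp add: rev_nth)
    consider "b = 0" | "b = length w' - 1" | "0 < b" "b < length w' - 1" using ab by fastforce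
    then show ?thesis
    proof cases
      case 1 then show ?thesis using Bb w'(2,4) y ab by auto
    next
      case 2 then show ?thesis using Bb w'(2,3) x ab by auto
    next
      case 3
      then have "w' ! (length w' - Suc b) \<in> C" using w'(5) unfolding interior_def by auto
      then show ?thesis using CP[OF ab(1)] Bb 3 by auto
    qed
  qed
  have Bne: "?B \<noteq> []" using w'(2) by auto
  have l3: "length P + length ?B \<ge> 3" using w'(2) P(2) by (cases P) auto
  have "induced_cycle V E (P @ ?B)"
    using cycle_join[OF P(1) Bi dj P(2) Bne l3 P(3) sB cr] .
  moreover have "length (P @ ?B) \<ge> length P + 2" using w'(2) by simp
  ultimately show ?thesis by blast
qed


lemma nbh_mono: "S \<subseteq> T \<Longrightarrow> nbh S \<subseteq> nbh T" unfolding nbh_def by auto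

lemma ipath_take: "ipath P \<Longrightarrow> ipath (take n P)"
  unfolding ipath_def by (auto simp: nth_take)

lemma ipath_drop: "ipath P \<Longrightarrow> ipath (drop n P)"
  unfolding ipath_def by (auto simp: nth_drop)

lemma ipath_snoc:
  assumes "ipath P" "P \<noteq> []" "v \<notin> set P" "\<And>m. m < length P \<Longrightarrow> E (P!m) v \<longleftrightarrow> m = length P - 1"
  shows "ipath (P @ [v])"
  unfolding ipath_def
proof (intro conjI allI impI)
  show "distinct (P @ [v])" using assms(1,3) unfolding ipath_def by simp
  fix a b assume ab: "a < length (P @ [v])" "b < length (P @ [v])"
  have P: "\<And>a b. a < length P \<Longrightarrow> b < length P \<Longrightarrow> E (P!a) (P!b) \<longleftrightarrow> (b = Suc a \<or> a = Suc b)"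
    using assms(1) unfolding ipath_def by blast
  consider "a < length P" "b < length P" | "a = length P" "b < length P" | "a < length P" "b = length P"
    | "a = length P" "b = length P" using ab by fastforce
  then show "E ((P @ [v]) ! a) ((P @ [v]) ! b) = (b = Suc a \<or> a = Suc b)"
  proof cases
    case 1 then show ?thesis using P by (simp add: nth_append)
  next
    case 2 then show ?thesis using assms(2) assms(4)[of b] esym_iff[of v] by (auto simp: nth_append)
  next
    case 3 then show ?thesis using assms(2) assms(4)[of a] by (auto simp: nth_append)
  qed simp
qed

end

locale cgame = sgraph +
  fixes k :: nat
  assumes k1: "k \<ge> 1"
    and conn: "\<forall>u\<in>V. \<forall>w\<in>V. reach V E u w"
    and nocyc: "\<And>vs. induced_cycle V E vs \<Longrightarrow> length vs < k + 2"
    and Vne: "V \<noteq> {}"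
begin

definition CC :: "'a list \<Rightarrow> 'a \<Rightarrow> 'a set" where
  "CC P r = comp (V - nbh (set P)) r"

definition priv :: "'a list \<Rightarrow> 'a \<Rightarrow> nat \<Rightarrow> 'a \<Rightarrow> bool" where
  "priv P r m x \<longleftrightarrow> x \<in> bd (CC P r) \<and> E (P!m) x \<and> (\<forall>m'<length P. E (P!m') x \<longrightarrow> m' = m)"

definition wfst :: "'a list \<Rightarrow> nat list \<Rightarrow> bool" where
  "wfst P J \<longleftrightarrow> ipath P \<and> P \<noteq> [] \<and> set P \<subseteq> V \<and> length J = k \<and> (\<forall>j<k. J!j < length P)
     \<and> (\<forall>m<length P. \<exists>j<k. J!j = m)"

definition good :: "'a list \<Rightarrow> nat list \<Rightarrow> 'a \<Rightarrow> bool" where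
  "good P J r \<longleftrightarrow> wfst P J \<and> r \<in> V \<and> r \<notin> nbh (set P)"

definition extra :: "nat list \<Rightarrow> nat \<Rightarrow> bool" where
  "extra J j \<longleftrightarrow> (\<exists>j'<j. J!j' = J!j)"

definition mu :: "('a list \<times> nat list \<times> 'a) \<Rightarrow> nat" where
  "mu = (\<lambda>(P, J, r). card (CC P r))"
definition mu2 :: "('a list \<times> nat list \<times> 'a) \<Rightarrow> nat" where
  "mu2 = (\<lambda>(P, J, r). length P)"
definition mu3 :: "('a list \<times> nat list \<times> 'a) \<Rightarrow> nat" where
  "mu3 = (\<lambda>(P, J, r). \<Sum>j<length J. length P - 1 - J!j)"

abbreviation "M \<equiv> measures [mu, mu2, mu3]"

lemma least_not_extra:
  assumes "\<exists>j<k. J!j = m"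
  shows "\<exists>j<k. J!j = m \<and> \<not> extra J j"
proof -
  obtain j where j: "j < k \<and> J!j = m" "\<And>j'. j' < k \<and> J!j' = m \<Longrightarrow> j \<le> j'"
    using assms ex_has_least_nat[of "\<lambda>j. j < k \<and> J!j = m" _ id] by auto
  have "\<not> extra J j" unfolding extra_def using j by (metis less_trans not_le)
  then show ?thesis using j by blast
qed

context
  fixes P J r
  assumes g: "good P J r"
begin

lemma g_wf: "wfst P J" using g unfolding good_def by simp
lemma g_ip: "ipath P" "P \<noteq> []" "set P \<subseteq> V" "length J = k" "\<And>j. j < k \<Longrightarrow> J!j < length P"
  "\<And>m. m < length P \<Longrightarrow> \<exists>j<k. J!j = m"
  using g_wf unfolding wfst_def by auto
lemma g_r: "r \<in> V - nbh (set P)" using g unfolding good_def by simp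
lemma g_rC: "r \<in> CC P r" unfolding CC_def by (rule comp_self)
lemma g_CX: "CC P r \<subseteq> V - nbh (set P)" unfolding CC_def using comp_sub[OF g_r] .
lemma g_fin: "finite (CC P r)" using g_CX fin by (meson Diff_subset finite_subset subset_trans)
lemma g_clos: "a \<in> CC P r \<Longrightarrow> b \<in> V - nbh (set P) \<Longrightarrow> E a b \<Longrightarrow> b \<in> CC P r"
  unfolding CC_def using comp_closed[OF g_r] by blast
lemma g_bd: "x \<in> bd (CC P r) \<Longrightarrow> \<exists>m<length P. E (P!m) x"
proof -
  assume x: "x \<in> bd (CC P r)"
  have "x \<in> nbh (set P)" "x \<notin> set P" using bd_in[OF g_r] x unfolding CC_def by auto
  then obtain u where "u \<in> set P" "E u x" unfolding nbh_def by auto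
  then show ?thesis by (metis in_set_conv_nth)
qed
lemma g_bd2: "x \<in> bd (CC P r) \<Longrightarrow> x \<notin> set P \<and> x \<in> V"
  using bd_in[OF g_r] unfolding CC_def bd_def using inV2 by auto
lemma g_out: "a \<in> CC P r \<Longrightarrow> b \<notin> CC P r \<Longrightarrow> E a b \<Longrightarrow> b \<in> bd (CC P r)"
  unfolding bd_def by auto
lemma g_bdne: "bd (CC P r) \<noteq> {}"
proof -
  obtain p where p: "p \<in> set P" using g_ip(2) by (cases P) auto
  have pV: "p \<in> V" using p g_ip(3) by auto
  have "reach V E r p" using conn g_r pV by auto
  moreover have "p \<notin> CC P r" using g_CX p unfolding nbh_def by auto
  ultimately obtain c d where "c \<in> CC P r" "d \<notin> CC P r" "E c d"
    using leave[of V r p "CC P r"] g_rC unfolding reach_def rel_def by auto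
  then show ?thesis unfolding bd_def by auto
qed

lemma caught_or:
  assumes "r' \<in> V" "r' = r \<or> E r r'" "r' \<notin> nbh S" "nbh (set P) \<subseteq> nbh S"
  shows "r' \<in> CC P r"
proof (cases "r' = r")
  case True then show ?thesis using g_rC by simp
next
  case False
  then have "E r r'" using assms by auto
  moreover have "r' \<in> V - nbh (set P)" using assms by auto
  ultimately show ?thesis using g_clos g_rC by blast
qed

lemma shrink:
  assumes r': "r' \<in> CC P r" "r' \<in> V - nbh S"
    and cl: "\<And>a b. a \<in> CC P r \<Longrightarrow> b \<in> V - nbh S \<Longrightarrow> E a b \<Longrightarrow> b \<in> CC P r"
  shows "comp (V - nbh S) r' \<subseteq> CC P r"
  using comp_subset[OF r'(1)] cl by blast


lemma trim_comp:
  assumes m: "m < length P" and s1: "set P - {P!m} \<subseteq> set P'" and s2: "set P' \<subseteq> set P"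
    and np: "\<not>(\<exists>x. priv P r m x)"
    and r': "r' \<in> V" "r' = r \<or> E r r'" "r' \<notin> nbh (set P')"
  shows "CC P' r' = CC P r"
proof -
  have cl: "b \<in> CC P r" if ab: "a \<in> CC P r" "b \<in> V - nbh (set P')" "E a b" for a b
  proof (rule ccontr)
    assume "b \<notin> CC P r"
    then have bb: "b \<in> bd (CC P r)" using g_out ab by blast
    obtain m'' where m'': "m'' < length P" "E (P!m'') b" using g_bd[OF bb] by blast
    have only: "m' = m" if "m' < length P" "E (P!m') b" for m'
    proof (rule ccontr)
      assume "m' \<noteq> m"
      then have "P!m' \<noteq> P!m" using g_ip(1) m that(1) unfolding ipath_def by (simp add: nth_eq_iff_index_eq)
      then have "P!m' \<in> set P'" using s1 that(1) by auto
      then have "b \<in> nbh (set P')" using that(2) unfolding nbh_def by auto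
      then show False using ab(2) by auto
    qed
    have "priv P r m b" unfolding priv_def using bb m'' only by auto
    then show False using np by blast
  qed
  have r'C: "r' \<in> CC P r"
  proof (cases "r' = r")
    case True then show ?thesis using g_rC by simp
  next
    case False then show ?thesis using r' cl[OF g_rC] by auto
  qed
  have "r' \<in> V - nbh (set P')" using r' by simp
  from shrink[OF r'C this cl] have "CC P' r' \<subseteq> CC P r" unfolding CC_def[of P' r'] .
  moreover have "CC P r \<subseteq> CC P' r'"
  proof -
    have "CC P r = comp (V - nbh (set P)) r'" using comp_eq r'C unfolding CC_def by metis
    also have "\<dots> \<subseteq> comp (V - nbh (set P')) r'" using nbh_mono[OF s2] by (intro comp_mono) auto
    finally show ?thesis unfolding CC_def .
  qed
  ultimately show ?thesis by blast
qed

lemma case_end: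
  assumes i2: "2 \<le> length P" and np: "\<not>(\<exists>x. priv P r (length P - 1) x)"
    and r': "r' \<in> V" "r' = r \<or> E r r'"
  shows "wfst (butlast P) (map (\<lambda>j. min j (length P - 2)) J) \<and>
    cop_step E (map ((!) P) J) (map ((!) (butlast P)) (map (\<lambda>j. min j (length P - 2)) J)) \<and>
    (r' \<notin> nbh (set (butlast P)) \<longrightarrow> ((butlast P, map (\<lambda>j. min j (length P - 2)) J, r'), (P, J, r)) \<in> M)"
proof -
  let ?i = "length P"
  let ?P = "butlast P" and ?J = "map (\<lambda>j. min j (length P - 2)) J"
  have lP: "length ?P = ?i - 1" by simp
  have nP: "\<And>n. n < ?i - 1 \<Longrightarrow> ?P ! n = P ! n" by (simp add: nth_butlast)
  have wf: "wfst ?P ?J" unfolding wfst_def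
  proof (intro conjI allI impI)
    show "ipath ?P" using ipath_take[OF g_ip(1), of "?i - 1"] by (simp add: butlast_conv_take)
    show "?P \<noteq> []" using i2 by (cases P rule: rev_cases) auto
    show "set ?P \<subseteq> V" using g_ip(3) by (meson in_set_butlastD subset_iff)
    show "length ?J = k" using g_ip(4) by simp
    fix j assume "j < k" then show "?J ! j < length ?P" using g_ip(4,5) i2 by auto
  next
    fix m assume m: "m < length ?P"
    have mm: "m < length P" using m by simp
    obtain j where "j < k" "J!j = m" using g_ip(6)[OF mm] by auto
    then show "\<exists>j<k. ?J ! j = m" using g_ip(4) m by (intro exI[of _ j]) auto
  qed
  have e: "\<forall>a<?i. \<forall>b<?i. E (P!a) (P!b) \<longleftrightarrow> (b = Suc a \<or> a = Suc b)" using g_ip(1) unfolding ipath_def by blast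
  have ii: "?i - 1 < ?i" "?i - 2 < ?i" "?i - 1 = Suc (?i - 2)" using i2 by auto
  have adj: "E (P ! (?i - 1)) (P ! (?i - 2))" using e[rule_format, OF ii(1,2)] ii(3) by simp
  have cs: "cop_step E (map ((!) P) J) (map ((!) ?P) ?J)" unfolding cop_step_def
  proof (intro conjI allI impI)
    show "length (map ((!) ?P) ?J) = length (map ((!) P) J)" by simp
    fix j assume j: "j < length (map ((!) P) J)"
    then have jk: "J!j < ?i" using g_ip(4,5) by auto
    show "map ((!) ?P) ?J ! j = map ((!) P) J ! j \<or> E (map ((!) P) J ! j) (map ((!) ?P) ?J ! j)"
    proof (cases "J!j \<le> ?i - 2")
      case True then show ?thesis using j nP i2 by auto
    next
      case False
      then have "J!j = ?i - 1" using jk by auto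
      then show ?thesis using j nP i2 adj False by auto
    qed
  qed
  have "r' \<notin> nbh (set ?P) \<longrightarrow> ((?P, ?J, r'), (P, J, r)) \<in> M"
  proof
    assume rn: "r' \<notin> nbh (set ?P)"
    have s1: "set P - {P ! (?i - 1)} \<subseteq> set ?P"
    proof
      fix x assume "x \<in> set P - {P ! (?i - 1)}"
      moreover have "P = ?P @ [P ! (?i - 1)]" using i2
        by (metis append_butlast_last_id last_conv_nth list.size(3) not_numeral_le_zero)
      ultimately show "x \<in> set ?P" by (metis Diff_iff Un_iff empty_set list.simps(15) set_append singletonD)
    qed
    have sb: "set ?P \<subseteq> set P" by (meson in_set_butlastD subsetI)
    have "CC ?P r' = CC P r"
      by (rule trim_comp[of "?i - 1" ?P r']) (use s1 np r' rn i2 sb in auto)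
    then show "((?P, ?J, r'), (P, J, r)) \<in> M"
      using i2 by (intro measures_lesseq measures_less) (auto simp: mu_def mu2_def)
  qed
  then show ?thesis using wf cs by blast
qed

lemma case_front:
  assumes i2: "2 \<le> length P" and np: "\<not>(\<exists>x. priv P r 0 x)"
    and r': "r' \<in> V" "r' = r \<or> E r r'"
  shows "wfst (tl P) (map (\<lambda>j. j - 1) J) \<and>
    cop_step E (map ((!) P) J) (map ((!) (tl P)) (map (\<lambda>j. j - 1) J)) \<and>
    (r' \<notin> nbh (set (tl P)) \<longrightarrow> ((tl P, map (\<lambda>j. j - 1) J, r'), (P, J, r)) \<in> M)"
proof -
  let ?i = "length P"
  let ?P = "tl P" and ?J = "map (\<lambda>j. j - 1) J"
  have nP: "\<And>n. n < ?i - 1 \<Longrightarrow> ?P ! n = P ! Suc n" by (simp add: nth_tl)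
  have wf: "wfst ?P ?J" unfolding wfst_def
  proof (intro conjI allI impI)
    have "drop 1 P = tl P" by (cases P) auto
    then show "ipath ?P" using ipath_drop[OF g_ip(1), of 1] by simp
    show "?P \<noteq> []" using i2 by (cases P) auto
    show "set ?P \<subseteq> V" using g_ip(3) by (cases P) auto
    show "length ?J = k" using g_ip(4) by simp
    fix j assume jk: "j < k"
    have "J!j < length P" using g_ip(5)[OF jk] .
    then show "?J ! j < length ?P" using g_ip(4) jk i2 by simp
  next
    fix m assume m: "m < length ?P"
    have mm: "Suc m < length P" using m by simp
    obtain j where "j < k" "J!j = Suc m" using g_ip(6)[OF mm] by auto
    then show "\<exists>j<k. ?J ! j = m" using g_ip(4) m by (intro exI[of _ j]) auto
  qed
  have e: "\<forall>a<?i. \<forall>b<?i. E (P!a) (P!b) \<longleftrightarrow> (b = Suc a \<or> a = Suc b)" using g_ip(1) unfolding ipath_def by blast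
  have ii: "0 < ?i" "1 < ?i" using i2 by auto
  have adj: "E (P ! 0) (P ! 1)" using e[rule_format, OF ii] by simp
  have cs: "cop_step E (map ((!) P) J) (map ((!) ?P) ?J)" unfolding cop_step_def
  proof (intro conjI allI impI)
    show "length (map ((!) ?P) ?J) = length (map ((!) P) J)" by simp
    fix j assume j: "j < length (map ((!) P) J)"
    then have jk: "J!j < ?i" using g_ip(4,5) by auto
    show "map ((!) ?P) ?J ! j = map ((!) P) J ! j \<or> E (map ((!) P) J ! j) (map ((!) ?P) ?J ! j)"
    proof (cases "J!j = 0")
      case False then show ?thesis using j nP i2 jk by auto
    next
      case True
      then show ?thesis using j nP[of 0] i2 adj by auto
    qed
  qed
  have "r' \<notin> nbh (set ?P) \<longrightarrow> ((?P, ?J, r'), (P, J, r)) \<in> M"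
  proof
    assume rn: "r' \<notin> nbh (set ?P)"
    have s1: "set P - {P ! 0} \<subseteq> set ?P" using i2 by (cases P) auto
    have sb: "set ?P \<subseteq> set P" by (cases P) auto
    have "CC ?P r' = CC P r"
      by (rule trim_comp[of 0 ?P r']) (use s1 np r' rn i2 sb in auto)
    then show "((?P, ?J, r'), (P, J, r)) \<in> M"
      using i2 by (intro measures_lesseq measures_less) (auto simp: mu_def mu2_def)
  qed
  then show ?thesis using wf cs by blast
qed

lemma strict_less:
  assumes r': "r' \<in> CC P r" "r' \<in> V - nbh S"
    and cl: "\<And>a b. a \<in> CC P r \<Longrightarrow> b \<in> V - nbh S \<Longrightarrow> E a b \<Longrightarrow> b \<in> CC P r"
    and c: "c \<in> CC P r" "c \<in> nbh S"
  shows "card (comp (V - nbh S) r') < card (CC P r)"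
proof -
  have sub: "comp (V - nbh S) r' \<subseteq> CC P r" using shrink[OF r' cl] .
  have "comp (V - nbh S) r' \<subseteq> V - nbh S" using comp_sub[OF r'(2)] .
  then have "c \<notin> comp (V - nbh S) r'" using c(2) by auto
  then have "comp (V - nbh S) r' \<subset> CC P r" using sub c(1) by blast
  then show ?thesis using psubset_card_mono[OF g_fin] by blast
qed

lemma case_walk:
  assumes ex: "\<exists>j<k. J!j < length P - 1 \<and> extra J j"
    and r': "r' \<in> V" "r' = r \<or> E r r'"
  shows "wfst P (map (\<lambda>j. if J!j < length P - 1 \<and> extra J j then Suc (J!j) else J!j) [0..<k]) \<and>
    cop_step E (map ((!) P) J) (map ((!) P) (map (\<lambda>j. if J!j < length P - 1 \<and> extra J j then Suc (J!j) else J!j) [0..<k])) \<and>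
    (r' \<notin> nbh (set P) \<longrightarrow> ((P, map (\<lambda>j. if J!j < length P - 1 \<and> extra J j then Suc (J!j) else J!j) [0..<k], r'), (P, J, r)) \<in> M)"
proof -
  let ?i = "length P"
  define J' where "J' = map (\<lambda>j. if J!j < length P - 1 \<and> extra J j then Suc (J!j) else J!j) [0..<k]"
  have lJ: "length J' = k" unfolding J'_def by simp
  have nJ: "\<And>j. j < k \<Longrightarrow> J'!j = (if J!j < ?i - 1 \<and> extra J j then Suc (J!j) else J!j)"
    unfolding J'_def by simp
  have e: "\<forall>a<?i. \<forall>b<?i. E (P!a) (P!b) \<longleftrightarrow> (b = Suc a \<or> a = Suc b)" using g_ip(1) unfolding ipath_def by blast
  have wf: "wfst P J'" unfolding wfst_def
  proof (intro conjI allI impI)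
    show "ipath P" "P \<noteq> []" "set P \<subseteq> V" using g_ip by auto
    show "length J' = k" by (rule lJ)
    fix j assume jk: "j < k"
    show "J' ! j < length P" using nJ[OF jk] g_ip(5)[OF jk] by auto
  next
    fix m assume m: "m < length P"
    obtain j where "j < k" "J!j = m" "\<not> extra J j" using least_not_extra[OF g_ip(6)[OF m]] by blast
    then show "\<exists>j<k. J' ! j = m" using nJ by (intro exI[of _ j]) auto
  qed
  have cs: "cop_step E (map ((!) P) J) (map ((!) P) J')" unfolding cop_step_def
  proof (intro conjI allI impI)
    show "length (map ((!) P) J') = length (map ((!) P) J)" using lJ g_ip(4) by simp
    fix j assume j: "j < length (map ((!) P) J)"
    then have jk: "j < k" using g_ip(4) by simp
    show "map ((!) P) J' ! j = map ((!) P) J ! j \<or> E (map ((!) P) J ! j) (map ((!) P) J' ! j)"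
    proof (cases "J!j < ?i - 1 \<and> extra J j")
      case True
      then have "E (P!(J!j)) (P!(Suc (J!j)))" using e by auto
      then show ?thesis using True nJ[OF jk] jk lJ g_ip(4) by auto
    next
      case False then show ?thesis using nJ[OF jk] jk lJ g_ip(4) by auto
    qed
  qed
  have "r' \<notin> nbh (set P) \<longrightarrow> ((P, J', r'), (P, J, r)) \<in> M"
  proof
    assume rn: "r' \<notin> nbh (set P)"
    have "r' \<in> CC P r" using caught_or[OF r' rn] by simp
    then have cc: "CC P r' = CC P r" unfolding CC_def using comp_eq by metis
    obtain j0 where j0: "j0 < k" "J!j0 < ?i - 1" "extra J j0" using ex by blast
    have "(\<Sum>j<k. ?i - 1 - J'!j) < (\<Sum>j<k. ?i - 1 - J!j)"
    proof (rule sum_strict_mono_ex1)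
      show "finite {..<k}" by simp
      show "\<forall>j\<in>{..<k}. ?i - 1 - J'!j \<le> ?i - 1 - J!j" using nJ by auto
      show "\<exists>j\<in>{..<k}. ?i - 1 - J'!j < ?i - 1 - J!j" using nJ j0 by (intro bexI[of _ j0]) auto
    qed
    then have "mu3 (P, J', r') < mu3 (P, J, r)" unfolding mu3_def using lJ g_ip(4) by simp
    then show "((P, J', r'), (P, J, r)) \<in> M" using cc
      by (intro measures_lesseq measures_less) (auto simp: mu_def mu2_def)
  qed
  then show ?thesis using wf cs unfolding J'_def by blast
qed

lemma case_ext:
  assumes v: "priv P r (length P - 1) v" and ex: "\<exists>j<k. J!j = length P - 1 \<and> extra J j"
    and r': "r' \<in> V" "r' = r \<or> E r r'"
  shows "wfst (P @ [v]) (map (\<lambda>j. if J!j = length P - 1 \<and> extra J j then length P else J!j) [0..<k]) \<and>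
    cop_step E (map ((!) P) J) (map ((!) (P @ [v])) (map (\<lambda>j. if J!j = length P - 1 \<and> extra J j then length P else J!j) [0..<k])) \<and>
    (r' \<notin> nbh (set (P @ [v])) \<longrightarrow> ((P @ [v], map (\<lambda>j. if J!j = length P - 1 \<and> extra J j then length P else J!j) [0..<k], r'), (P, J, r)) \<in> M)"
proof -
  let ?i = "length P"
  define J' where "J' = map (\<lambda>j. if J!j = length P - 1 \<and> extra J j then length P else J!j) [0..<k]"
  have lJ: "length J' = k" unfolding J'_def by simp
  have nJ: "\<And>j. j < k \<Longrightarrow> J'!j = (if J!j = ?i - 1 \<and> extra J j then ?i else J!j)"
    unfolding J'_def by simp
  have vb: "v \<in> bd (CC P r)" "E (P!(?i - 1)) v" "\<forall>m'<?i. E (P!m') v \<longrightarrow> m' = ?i - 1"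
    using v unfolding priv_def by auto
  have vn: "v \<notin> set P" "v \<in> V" using g_bd2[OF vb(1)] by auto
  have ip: "ipath (P @ [v])"
  proof (rule ipath_snoc[OF g_ip(1,2) vn(1)])
    fix m assume "m < ?i" then show "E (P!m) v \<longleftrightarrow> m = ?i - 1" using vb(2,3) by auto
  qed
  have nP: "\<And>n. n < ?i \<Longrightarrow> (P @ [v]) ! n = P ! n" by (simp add: nth_append)
  have nPv: "(P @ [v]) ! ?i = v" by simp
  have wf: "wfst (P @ [v]) J'" unfolding wfst_def
  proof (intro conjI allI impI)
    show "ipath (P @ [v])" by (rule ip)
    show "P @ [v] \<noteq> []" by simp
    show "set (P @ [v]) \<subseteq> V" using g_ip(3) vn by auto
    show "length J' = k" by (rule lJ)
    fix j assume jk: "j < k"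
    show "J' ! j < length (P @ [v])" using nJ[OF jk] g_ip(5)[OF jk] by auto
  next
    fix m assume m: "m < length (P @ [v])"
    show "\<exists>j<k. J' ! j = m"
    proof (cases "m < ?i")
      case True
      obtain j where "j < k" "J!j = m" "\<not> extra J j" using least_not_extra[OF g_ip(6)[OF True]] by blast
      then show ?thesis using nJ by (intro exI[of _ j]) auto
    next
      case False
      then have "m = ?i" using m by simp
      then show ?thesis using ex nJ by auto
    qed
  qed
  have cs: "cop_step E (map ((!) P) J) (map ((!) (P @ [v])) J')" unfolding cop_step_def
  proof (intro conjI allI impI)
    show "length (map ((!) (P @ [v])) J') = length (map ((!) P) J)" using lJ g_ip(4) by simp
    fix j assume j: "j < length (map ((!) P) J)"
    then have jk: "j < k" using g_ip(4) by simp
    have jl: "J!j < ?i" using g_ip(5)[OF jk] .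
    show "map ((!) (P @ [v])) J' ! j = map ((!) P) J ! j \<or> E (map ((!) P) J ! j) (map ((!) (P @ [v])) J' ! j)"
    proof (cases "J!j = ?i - 1 \<and> extra J j")
      case True
      then show ?thesis using nJ[OF jk] jk lJ g_ip(4) vb(2) nPv by auto
    next
      case False then show ?thesis using nJ[OF jk] jk lJ g_ip(4) nP[OF jl] by auto
    qed
  qed
  have "r' \<notin> nbh (set (P @ [v])) \<longrightarrow> ((P @ [v], J', r'), (P, J, r)) \<in> M"
  proof
    assume rn: "r' \<notin> nbh (set (P @ [v]))"
    have sub: "nbh (set P) \<subseteq> nbh (set (P @ [v]))" by (rule nbh_mono) auto
    have rC: "r' \<in> CC P r" using caught_or[OF r' rn sub] .
    obtain c where c: "c \<in> CC P r" "E c v" using vb(1) unfolding bd_def by auto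
    have cn: "c \<in> nbh (set (P @ [v]))" using esym[OF c(2)] unfolding nbh_def by auto
    have "card (CC (P @ [v]) r') < card (CC P r)" unfolding CC_def[of "P @ [v]"]
    proof (rule strict_less[OF rC _ _ c(1) cn])
      show "r' \<in> V - nbh (set (P @ [v]))" using r' rn by simp
      fix a b assume "a \<in> CC P r" "b \<in> V - nbh (set (P @ [v]))" "E a b"
      then show "b \<in> CC P r" using g_clos sub by blast
    qed
    then show "((P @ [v], J', r'), (P, J, r)) \<in> M"
      by (intro measures_less) (auto simp: mu_def)
  qed
  then show ?thesis using wf cs unfolding J'_def by blast
qed

lemma case_move:
  assumes i1: "length P = 1" and v: "priv P r 0 v" and bdv: "bd (CC P r) \<subseteq> {v}"
    and r': "r' \<in> V" "r' = r \<or> E r r'"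
  shows "wfst [v] J \<and> cop_step E (map ((!) P) J) (map ((!) [v]) J) \<and>
    (r' \<notin> nbh (set [v]) \<longrightarrow> (([v], J, r'), (P, J, r)) \<in> M)"
proof -
  have vb: "v \<in> bd (CC P r)" "E (P!0) v" using v unfolding priv_def by auto
  have vn: "v \<in> V" using g_bd2[OF vb(1)] by auto
  have J0: "\<And>j. j < k \<Longrightarrow> J!j = 0" using g_ip(5) i1 by fastforce
  have wf: "wfst [v] J" unfolding wfst_def
  proof (intro conjI allI impI)
    show "ipath [v]" unfolding ipath_def by auto
    show "[v] \<noteq> []" by simp
    show "set [v] \<subseteq> V" using vn by simp
    show "length J = k" using g_ip(4) .
    fix j assume "j < k" then show "J ! j < length [v]" using J0 by simp
  next
    fix m assume "m < length [v]"
    then show "\<exists>j<k. J ! j = m" using g_ip(6)[of 0] i1 by auto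
  qed
  have cs: "cop_step E (map ((!) P) J) (map ((!) [v]) J)" unfolding cop_step_def
    using J0 g_ip(4) vb(2) by auto
  have "r' \<notin> nbh (set [v]) \<longrightarrow> (([v], J, r'), (P, J, r)) \<in> M"
  proof
    assume rn: "r' \<notin> nbh (set [v])"
    have vnb: "v \<in> nbh (set [v])" unfolding nbh_def by auto
    have cl: "b \<in> CC P r" if "a \<in> CC P r" "b \<in> V - nbh (set [v])" "E a b" for a b
    proof (rule ccontr)
      assume "b \<notin> CC P r"
      then have "b \<in> bd (CC P r)" using g_out that by blast
      then have "b = v" using bdv by auto
      then show False using that(2) vnb by auto
    qed
    have rC: "r' \<in> CC P r"
    proof (cases "r' = r")
      case True then show ?thesis using g_rC by simp
    next
      case False then show ?thesis using cl[OF g_rC] r' rn by auto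
    qed
    obtain c where c: "c \<in> CC P r" "E c v" using vb(1) unfolding bd_def by auto
    have cn: "c \<in> nbh (set [v])" using esym[OF c(2)] unfolding nbh_def by auto
    have "card (CC [v] r') < card (CC P r)" unfolding CC_def[of "[v]"]
      by (rule strict_less[OF rC _ cl c(1) cn]) (use r' rn in simp)
    then show "(([v], J, r'), (P, J, r)) \<in> M"
      by (intro measures_less) (auto simp: mu_def)
  qed
  then show ?thesis using wf cs by blast
qed

lemma exists_v: "\<exists>v. priv P r (length P - 1) v \<or> (2 \<le> length P \<and> \<not>(\<exists>x. priv P r (length P - 1) x))"
proof (cases "2 \<le> length P")
  case True then show ?thesis by blast
next
  case False
  have "length P > 0" using g_ip(2) by simp
  then have i1: "length P = 1" using False by linarith
  obtain x where x: "x \<in> bd (CC P r)" using g_bdne by blast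
  obtain m where m: "m < length P" "E (P!m) x" using g_bd[OF x] by blast
  have "priv P r 0 x" unfolding priv_def using x m i1 by auto
  then show ?thesis using i1 by auto
qed

lemma no_extra_bound:
  assumes ne: "\<And>j. j < k \<Longrightarrow> \<not> extra J j"
  shows "k \<le> length P"
proof -
  have "inj_on (\<lambda>j. J!j) {..<k}"
  proof (rule inj_onI)
    fix a b assume ab: "a \<in> {..<k}" "b \<in> {..<k}" "J!a = J!b"
    show "a = b"
    proof (rule ccontr)
      assume "a \<noteq> b"
      then consider "a < b" | "b < a" by linarith
      then show False
      proof cases
        case 1 then have "extra J b" unfolding extra_def using ab by auto
        then show False using ne ab by auto
      next
        case 2 then have "extra J a" unfolding extra_def using ab by auto
        then show False using ne ab by auto
      qed
    qed
  qed
  moreover have "(\<lambda>j. J!j) ` {..<k} \<subseteq> {..<length P}" using g_ip(5) by auto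
  ultimately have "card {..<k} \<le> card {..<length P}" by (rule card_inj_on_le) simp
  then show ?thesis by simp
qed

end

definition cE where "cE P r \<longleftrightarrow> 2 \<le> length P \<and> \<not>(\<exists>x. priv P r (length P - 1) x)"
definition cF where "cF P r \<longleftrightarrow> 2 \<le> length P \<and> \<not>(\<exists>x. priv P r 0 x)"
definition cW where "cW P J \<longleftrightarrow> (\<exists>j<k. J!j < length P - 1 \<and> extra J j)"
definition cX where "cX P J \<longleftrightarrow> (\<exists>j<k. J!j = length P - 1 \<and> extra J j)"

definition plan :: "'a list \<Rightarrow> nat list \<Rightarrow> 'a \<Rightarrow> 'a list \<times> nat list" where
 "plan P J r = (
   if cE P r then (butlast P, map (\<lambda>j. min j (length P - 2)) J)
   else if cF P r then (tl P, map (\<lambda>j. j - 1) J)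
   else if cW P J then (P, map (\<lambda>j. if J!j < length P - 1 \<and> extra J j then Suc (J!j) else J!j) [0..<k])
   else if cX P J then (P @ [SOME v. priv P r (length P - 1) v], map (\<lambda>j. if J!j = length P - 1 \<and> extra J j then length P else J!j) [0..<k])
   else ([SOME v. priv P r (length P - 1) v], J))"

lemma plan_step:
  assumes g: "good P J r" and r': "r' \<in> V" "r' = r \<or> E r r'" and pl: "plan P J r = (P', J')"
  shows "wfst P' J' \<and> cop_step E (map ((!) P) J) (map ((!) P') J') \<and> (r' \<notin> nbh (set P') \<longrightarrow> ((P', J', r'), (P, J, r)) \<in> M)"
proof -
  let ?i = "length P"
  note gi = g_ip[OF g]
  consider (c1) "cE P r" | (c2) "\<not> cE P r" "cF P r" | (c3) "\<not> cE P r" "\<not> cF P r" "cW P J"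
    | (c4) "\<not> cE P r" "\<not> cF P r" "\<not> cW P J" "cX P J"
    | (c5) "\<not> cE P r" "\<not> cF P r" "\<not> cW P J" "\<not> cX P J"
    by blast
  then show ?thesis
  proof cases
    case c1
    then have "P' = butlast P" "J' = map (\<lambda>j. min j (?i - 2)) J" using pl unfolding plan_def by auto
    then show ?thesis using case_end[OF g _ _ r'] c1 unfolding cE_def by auto
  next
    case c2
    then have "P' = tl P" "J' = map (\<lambda>j. j - 1) J" using pl unfolding plan_def by auto
    then show ?thesis using case_front[OF g _ _ r'] c2 unfolding cF_def by auto
  next
    case c3
    then have "P' = P" "J' = map (\<lambda>j. if J!j < ?i - 1 \<and> extra J j then Suc (J!j) else J!j) [0..<k]"
      using pl unfolding plan_def by auto
    then show ?thesis using case_walk[OF g c3(3)[unfolded cW_def] r'] by simp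
  next
    case c4
    define v where "v = (SOME v. priv P r (?i-1) v)"
    have "\<exists>v. priv P r (?i - 1) v" using exists_v[OF g] c4(1) unfolding cE_def by blast
    then have pv: "priv P r (?i - 1) v" unfolding v_def by (rule someI_ex)
    have "P' = P @ [v]" "J' = map (\<lambda>j. if J!j = ?i - 1 \<and> extra J j then ?i else J!j) [0..<k]"
      using pl c4 unfolding plan_def v_def by auto
    then show ?thesis using case_ext[OF g pv c4(4)[unfolded cX_def] r'] by simp
  next
    case c5
    define v where "v = (SOME v. priv P r (?i-1) v)"
    have "\<exists>v. priv P r (?i - 1) v" using exists_v[OF g] c5(1) unfolding cE_def by blast
    then have pv: "priv P r (?i - 1) v" unfolding v_def by (rule someI_ex)
    have PJ: "P' = [v]" "J' = J"
      using pl c5 unfolding plan_def v_def by auto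
    have ne: "\<not> extra J j" if "j < k" for j
      using c5(3,4) gi(5)[OF that] that unfolding cW_def cX_def by (metis Suc_pred' gr_implies_not0 less_SucE neq0_conv)
    have kb: "k \<le> ?i" using no_extra_bound[OF g ne] by blast
    have rX: "r \<in> V - nbh (set P)" using g_r[OF g] .
    have i1: "?i = 1"
    proof (rule ccontr)
      assume "?i \<noteq> 1"
      moreover have "?i > 0" using gi(2) by simp
      ultimately have i2: "2 \<le> ?i" by linarith
      obtain x where x: "priv P r 0 x" using c5(2) i2 unfolding cF_def by blast
      obtain y where y: "priv P r (?i - 1) y" using c5(1) i2 unfolding cE_def by blast
      have xy: "x \<noteq> y"
      proof
        assume "x = y"
        then have "E (P!0) y" "\<forall>m'<?i. E (P!m') y \<longrightarrow> m' = ?i - 1" using x y unfolding priv_def by auto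
        moreover have "0 < ?i" using gi(2) by simp
        ultimately have "0 = ?i - 1" by blast
        then show False using i2 by simp
      qed
      have "\<exists>vs. induced_cycle V E vs \<and> length vs \<ge> ?i + 2"
        by (rule long_cycle[OF gi(1,2,3) rX, of x y]) (use x y xy in \<open>auto simp: priv_def CC_def\<close>)
      then show False using nocyc kb by fastforce
    qed
    have bdv: "bd (CC P r) \<subseteq> {v}"
    proof
      fix x assume x: "x \<in> bd (CC P r)"
      show "x \<in> {v}"
      proof (rule ccontr)
        assume xv: "x \<notin> {v}"
        obtain m where m: "m < ?i" "E (P!m) x" using g_bd[OF g x] by blast
        have "\<exists>vs. induced_cycle V E vs \<and> length vs \<ge> ?i + 2"
          by (rule long_cycle[OF gi(1,2,3) rX, of x v]) (use x m pv xv i1 in \<open>auto simp: priv_def CC_def\<close>)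
        then show False using nocyc kb i1 by fastforce
      qed
    qed
    have pv0: "priv P r 0 v" using pv i1 by simp
    show ?thesis using case_move[OF g i1 pv0 bdv r'] PJ by simp
  qed
qed

definition capt :: "'a list \<Rightarrow> 'a \<Rightarrow> bool" where
  "capt Q r \<longleftrightarrow> (\<exists>j<length Q. Q!j = r \<or> E (Q!j) r)"

definition Fst :: "('a list \<times> 'a list \<times> nat list) \<Rightarrow> 'a \<Rightarrow> ('a list \<times> 'a list \<times> nat list)" where
  "Fst \<sigma> r = (case \<sigma> of (Q, P, J) \<Rightarrow>
    if Q = map ((!) P) J \<and> good P J r then (case plan P J r of (P', J') \<Rightarrow> (map ((!) P') J', P', J'))
    else if capt Q r then (Q[(SOME j. j < length Q \<and> (Q!j = r \<or> E (Q!j) r)) := r], P, J)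
    else \<sigma>)"

definition a0 where "a0 = (SOME a. a \<in> V)"
definition s0 :: "'a list \<times> 'a list \<times> nat list" where "s0 = (replicate k a0, [a0], replicate k 0)"

definition strat :: "('a list \<times> 'a) list \<Rightarrow> 'a list" where
  "strat h = fst (foldl Fst s0 (map snd h))"

lemma a0V: "a0 \<in> V" unfolding a0_def using Vne by (simp add: some_in_eq)

lemma Fst_legal: "cop_step E (fst \<sigma>) (fst (Fst \<sigma> r))"
proof -
  obtain Q P J where s: "\<sigma> = (Q, P, J)" by (cases \<sigma>) auto
  show ?thesis
  proof (cases "Q = map ((!) P) J \<and> good P J r")
    case True
    obtain P' J' where pl: "plan P J r = (P', J')" by fastforce
    have "r \<in> V" using True unfolding good_def by simp
    then have "cop_step E (map ((!) P) J) (map ((!) P') J')" using plan_step[OF _ _ _ pl] True by blast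
    then show ?thesis using s True pl unfolding Fst_def by simp
  next
    case nt: False
    show ?thesis
    proof (cases "capt Q r")
      case True
      define j where "j = (SOME j. j < length Q \<and> (Q!j = r \<or> E (Q!j) r))"
      have j: "j < length Q \<and> (Q!j = r \<or> E (Q!j) r)" unfolding j_def
        using True unfolding capt_def by (rule someI_ex)
      have "fst (Fst \<sigma> r) = Q[j := r]" using s nt True unfolding Fst_def j_def by auto
      moreover have "cop_step E Q (Q[j := r])" unfolding cop_step_def using j
        by (auto simp: nth_list_update)
      ultimately show ?thesis using s by simp
    next
      case False
      then have "fst (Fst \<sigma> r) = Q" using s nt unfolding Fst_def by auto
      then show ?thesis using s unfolding cop_step_def by simp
    qed
  qed
qed

lemma Fst_capt:
  assumes "\<sigma> = (Q, P, J)" "Q = map ((!) P) J" "wfst P J" "r \<in> nbh (set P)"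
  shows "\<exists>j<k. fst (Fst \<sigma> r) ! j = r"
proof -
  have ng: "\<not> good P J r" using assms(4) unfolding good_def by simp
  obtain u where u: "u \<in> set P" "u = r \<or> E u r" using assms(4) unfolding nbh_def by auto
  obtain m where m: "m < length P" "P!m = u" using u(1) by (auto simp: in_set_conv_nth)
  obtain j where j: "j < k" "J!j = m" using assms(3) m(1) unfolding wfst_def by blast
  have lQ: "length Q = k" using assms(2,3) unfolding wfst_def by simp
  have "Q!j = u" using assms(2,3) j m lQ by simp
  then have ca: "capt Q r" unfolding capt_def using j lQ u(2) by auto
  define j0 where "j0 = (SOME j. j < length Q \<and> (Q!j = r \<or> E (Q!j) r))"
  have j0: "j0 < length Q \<and> (Q!j0 = r \<or> E (Q!j0) r)" unfolding j0_def
    using ca unfolding capt_def by (rule someI_ex)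
  have "fst (Fst \<sigma> r) = Q[j0 := r]" using assms(1) ng ca unfolding Fst_def j0_def by simp
  then show ?thesis using j0 lQ by (intro exI[of _ j0]) simp
qed

lemma hist_snd: "map snd (history s R t) = map R [0..<Suc t]"
  by (induction t) auto

definition sig :: "(nat \<Rightarrow> 'a) \<Rightarrow> nat \<Rightarrow> 'a list \<times> 'a list \<times> nat list" where
  "sig R t = foldl Fst s0 (map R [0..<t])"

lemma sig_Suc: "sig R (Suc t) = Fst (sig R t) (R t)"
  unfolding sig_def by simp

lemma cop_pos_sig: "cop_pos strat R t = fst (sig R t)"
proof (cases t)
  case 0 then show ?thesis unfolding cop_pos_def sig_def strat_def by simp
next
  case (Suc t')
  have "cop_pos strat R t = strat (history strat R t')" unfolding cop_pos_def Suc by simp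
  also have "\<dots> = fst (sig R t)" unfolding strat_def sig_def hist_snd Suc ..
  finally show ?thesis .
qed

lemma wins: "winning_cop_strategy V E k strat"
  unfolding winning_cop_strategy_def
proof (intro conjI allI impI)
  show "length (strat []) = k" unfolding strat_def s0_def by simp
  show "set (strat []) \<subseteq> V" unfolding strat_def s0_def using a0V by (auto simp: in_set_replicate)
  fix R t
  show "cop_step E (cop_pos strat R t) (cop_pos strat R (Suc t))"
    unfolding cop_pos_sig sig_Suc using Fst_legal by blast
next
  fix R assume rw: "robber_walk V E R"
  have RV: "R t \<in> V" for t
  proof (induction t)
    case 0 then show ?case using rw unfolding robber_walk_def by simp
  next
    case (Suc t) then show ?case using rw inV2 unfolding robber_walk_def by metis
  qed
  have Rs: "R (Suc t) = R t \<or> E (R t) (R (Suc t))" for t using rw unfolding robber_walk_def by simp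
  show "\<exists>t. \<exists>i<k. cop_pos strat R t ! i = R t \<or> cop_pos strat R (Suc t) ! i = R t"
  proof (rule ccontr)
    assume nw: "\<not> ?thesis"
    have nc: "\<not> (\<exists>j<k. fst (sig R (Suc t)) ! j = R t)" for t using nw unfolding cop_pos_sig by blast
    have inv: "fst (sig R t) = map ((!) (fst (snd (sig R t)))) (snd (snd (sig R t))) \<and>
               good (fst (snd (sig R t))) (snd (snd (sig R t))) (R t)" for t
    proof (induction t)
      case 0
      have s: "sig R 0 = (replicate k a0, [a0], replicate k 0)" unfolding sig_def s0_def by simp
      have wf: "wfst [a0] (replicate k 0)" unfolding wfst_def ipath_def using a0V k1
        by (auto intro!: exI[of _ 0])
      have "R 0 \<notin> nbh (set [a0])"
      proof
        assume "R 0 \<in> nbh (set [a0])"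
        then have "\<exists>j<k. fst (Fst (sig R 0) (R 0)) ! j = R 0"
          by (intro Fst_capt[OF s _ wf]) (auto simp: map_replicate_const)
        then show False using nc[of 0] sig_Suc by simp
      qed
      then show ?case using s wf RV unfolding good_def by (simp add: map_replicate_const)
    next
      case (Suc t)
      obtain Q P J where s: "sig R t = (Q, P, J)" by (cases "sig R t") auto
      obtain P' J' where pl: "plan P J (R t) = (P', J')" by fastforce
      have QP: "Q = map ((!) P) J" "good P J (R t)" using Suc s by auto
      have s': "sig R (Suc t) = (map ((!) P') J', P', J')"
        unfolding sig_Suc s using QP pl unfolding Fst_def by simp
      have ps: "wfst P' J' \<and> (R (Suc t) \<notin> nbh (set P') \<longrightarrow> ((P', J', R (Suc t)), (P, J, R t)) \<in> M)"
        using plan_step[OF QP(2) RV Rs pl] by blast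
      have "R (Suc t) \<notin> nbh (set P')"
      proof
        assume "R (Suc t) \<in> nbh (set P')"
        then have "\<exists>j<k. fst (Fst (sig R (Suc t)) (R (Suc t))) ! j = R (Suc t)"
          using Fst_capt[OF s' refl] ps by blast
        then show False using nc[of "Suc t"] sig_Suc by simp
      qed
      then show ?case using s' ps RV unfolding good_def by simp
    qed
    define f where "f t = (fst (snd (sig R t)), snd (snd (sig R t)), R t)" for t
    have "(f (Suc t), f t) \<in> M" for t
    proof -
      obtain Q P J where s: "sig R t = (Q, P, J)" by (cases "sig R t") auto
      obtain P' J' where pl: "plan P J (R t) = (P', J')" by fastforce
      have QP: "Q = map ((!) P) J" "good P J (R t)" using inv[of t] s by auto
      have s': "sig R (Suc t) = (map ((!) P') J', P', J')"
        unfolding sig_Suc s using QP pl unfolding Fst_def by simp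
      have "R (Suc t) \<notin> nbh (set P')" using inv[of "Suc t"] s' unfolding good_def by simp
      then have "((P', J', R (Suc t)), (P, J, R t)) \<in> M" using plan_step[OF QP(2) RV Rs pl] by blast
      then show ?thesis unfolding f_def using s s' by simp
    qed
    moreover have "wf M" by simp
    ultimately show False using wf_no_infinite_down_chainE[of M f] by blast
  qed
qed

lemma cops_win: "cops_win V E k"
  unfolding cops_win_def using wins by blast

end

lemma reach_in: "reach V E v u \<Longrightarrow> v \<in> V \<Longrightarrow> u \<in> V"
  unfolding reach_def by (induction rule: rtranclp_induct) auto

lemma reach_sub:
  assumes "reach V E v u"
  shows "reach {u. reach V E v u} (\<lambda>x y. E x y \<and> x \<in> {u. reach V E v u} \<and> y \<in> {u. reach V E v u}) v u"
  using assms unfolding reach_def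
proof (induction rule: rtranclp_induct)
  case base then show ?case by simp
next
  case (step a b)
  have b: "(\<lambda>x y. E x y \<and> x \<in> V \<and> y \<in> V)\<^sup>*\<^sup>* v b" by (rule rtranclp.rtrancl_into_rtrancl[OF step(1) step(2)])
  show ?case by (rule rtranclp.rtrancl_into_rtrancl[OF step.IH]) (use step(1,2) b in simp)
qed

lemma comp_cgame:
  assumes g: "graph V E" and l: "l \<ge> 3" and nc: "\<not> (\<exists>vs. induced_cycle V E vs \<and> length vs \<ge> l)"
    and v: "v \<in> V"
  shows "cops_win {u. reach V E v u} (\<lambda>x y. E x y \<and> x \<in> {u. reach V E v u} \<and> y \<in> {u. reach V E v u}) (l - 2)"
proof -
  define C where "C = {u. reach V E v u}"
  define Ec where "Ec = (\<lambda>x y. E x y \<and> x \<in> C \<and> y \<in> C)"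
  have CV: "C \<subseteq> V"
  proof
    fix u assume "u \<in> C" then show "u \<in> V" using reach_in[of V E v u] v unfolding C_def by simp
  qed
  have vC: "v \<in> C" unfolding C_def reach_def by simp
  have gC: "graph C Ec" using g CV finite_subset unfolding graph_def Ec_def by blast
  have sy: "symp (\<lambda>x y. Ec x y \<and> x \<in> C \<and> y \<in> C)" using g unfolding symp_def Ec_def graph_def by blast
  have rv: "reach C Ec v u" if "u \<in> C" for u using reach_sub[of V E v u] that unfolding C_def Ec_def by simp
  have conn: "\<forall>u\<in>C. \<forall>w\<in>C. reach C Ec u w"
  proof (intro ballI)
    fix u w assume "u \<in> C" "w \<in> C"
    then have "reach C Ec v u" "reach C Ec v w" using rv by auto
    then have "reach C Ec u v" "reach C Ec v w" unfolding reach_def using sympD[OF symp_rtranclp[OF sy]] by blast+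
    then show "reach C Ec u w" unfolding reach_def by (rule rtranclp_trans)
  qed
  have ncC: "length vs < l - 2 + 2" if "induced_cycle C Ec vs" for vs
  proof -
    have "induced_cycle V E vs" using that CV unfolding induced_cycle_def Ec_def
      by (auto simp: subset_iff)
    then show ?thesis using nc l by fastforce
  qed
  interpret cgame C Ec "l - 2"
    using gC conn ncC vC l by unfold_locales (auto simp: sgraph_def)
  show ?thesis using cops_win unfolding C_def Ec_def .
qed

theorem proposition3:
  fixes V :: "'a set" and E :: "'a \<Rightarrow> 'a \<Rightarrow> bool" and l :: nat
  assumes "graph V E"
    and "l \<ge> 3"
    and "\<not> (\<exists>vs. induced_cycle V E vs \<and> length vs \<ge> l)"
  shows "cop_number V E \<le> l - 2"
proof (cases "V = {}")
  case True then show ?thesis unfolding cop_number_def by simp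
next
  case False
  have comps: "components V E = (\<lambda>v. {u. reach V E v u}) ` V" unfolding components_def by auto
  have fin: "finite V" using assms(1) unfolding graph_def by simp
  have each: "cop_number_conn C (\<lambda>x y. E x y \<and> x \<in> C \<and> y \<in> C) \<le> l - 2" if Cc: "C \<in> components V E" for C
  proof -
    obtain v where v: "v \<in> V" "C = {u. reach V E v u}" using Cc comps by auto
    have "cops_win C (\<lambda>x y. E x y \<and> x \<in> C \<and> y \<in> C) (l - 2)" using comp_cgame[OF assms v(1)] v(2) by simp
    moreover have "l - 2 \<ge> 1" using assms(2) by simp
    ultimately show ?thesis unfolding cop_number_conn_def by (intro Least_le) simp
  qed
  let ?f = "\<lambda>C. cop_number_conn C (\<lambda>x y. E x y \<and> x \<in> C \<and> y \<in> C)"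
  have fc: "finite (?f ` components V E)" using comps fin by simp
  have ne: "?f ` components V E \<noteq> {}" using comps False by simp
  have "Max (?f ` components V E) \<le> l - 2" using Max_le_iff[OF fc ne] each by blast
  then show ?thesis unfolding cop_number_def using False by simp
qed

end
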